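(* Consider a nonatomic routing game in which no two paths in $\mathcal{P}$ share an edge, and whose edge cost functions are continuous and strictly increasing. Viewing each path cost $c_P$ as a function of the flow on $P$, suppose that for each commodity $i$, $c_P(0)=c_{P'}(0)$ for all $P,P'\in\mathcal{P}_i$. Then $\mathrm{PoTS}=1$.
   Context: A nonatomic routing game: a directed network $(V,E)$, commodities $i=1,\dots,k$ with sizes $r_i>0$ and finite nonempty sets $\mathcal{P}_i$ of $s_i$–$t_i$ paths, $\mathcal{P}=\bigcup_i\mathcal{P}_i$; edge costs $c_e:\mathbb{R}_+\to\mathbb{R}_+$. A flow $f\in\mathbb{R}_+^{\mathcal{P}}$ is feasible if $\sum_{P\in\mathcal{P}_i}f_P=r_i$ for each $i$; $f_e=\sum_{P\ni e}f_P$, $c_P(f)=\sum_{e\in P}c_e(f_e)$, cost $C(f)=\sum_ec_e(f_e)f_e$. An equilibrium flow is a feasible $f$ with $c_P(f)\le c_{P'}(f)$ for every $i$, every $P\in\mathcal{P}_i$ with $f_P>0$ and every $P'\in\mathcal{P}_i$. A transition is a feasible flow $f$ such that for every $i$ and every $P\in\mathcal{P}_i$ with $f_P>0$ there is an equilibrium flow $f'$ with $f'_P>0$. $\mathrm{PoTS}$ is the infimum of the costs of transitions divided by the minimum cost of a feasible flow. *)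

theory Defs
  imports "HOL-Analysis.Analysis"
begin

definition is_path ::
  "'v set \<Rightarrow> 'e set \<Rightarrow> ('e \<Rightarrow> 'v) \<Rightarrow> ('e \<Rightarrow> 'v) \<Rightarrow> 'v \<Rightarrow> 'v \<Rightarrow> 'e list \<Rightarrow> bool" where
  "is_path V E etail ehead u w p \<longleftrightarrow>
     set p \<subseteq> E \<and> u \<in> V \<and>
     (p = [] \<longrightarrow> u = w) \<and>
     (p \<noteq> [] \<longrightarrow> etail (hd p) = u \<and> ehead (last p) = w) \<and>
     (\<forall>j. Suc j < length p \<longrightarrow> ehead (p ! j) = etail (p ! Suc j)) \<and>
     distinct (u # map ehead p)"

definition routing_game ::
  "'v set \<Rightarrow> 'e set \<Rightarrow> ('e \<Rightarrow> 'v) \<Rightarrow> ('e \<Rightarrow> 'v) \<Rightarrow> nat \<Rightarrow> (nat \<Rightarrow> 'v) \<Rightarrow> (nat \<Rightarrow> 'v)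
     \<Rightarrow> (nat \<Rightarrow> real) \<Rightarrow> (nat \<Rightarrow> 'e list set) \<Rightarrow> ('e \<Rightarrow> real \<Rightarrow> real) \<Rightarrow> bool" where
  "routing_game V E etail ehead k s t r Ps c \<longleftrightarrow>
     finite V \<and> finite E \<and> (\<forall>e\<in>E. etail e \<in> V \<and> ehead e \<in> V) \<and>
     k \<ge> 1 \<and>
     (\<forall>i\<in>{1..k}. s i \<in> V \<and> t i \<in> V \<and> s i \<noteq> t i \<and> r i > 0 \<and>
        finite (Ps i) \<and> Ps i \<noteq> {} \<and>
        (\<forall>P\<in>Ps i. is_path V E etail ehead (s i) (t i) P)) \<and>
     (\<forall>i\<in>{1..k}. \<forall>j\<in>{1..k}. i \<noteq> j \<longrightarrow> Ps i \<inter> Ps j = {}) \<and>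
     (\<forall>e\<in>E. \<forall>x\<ge>0. c e x \<ge> 0)"

definition all_paths :: "nat \<Rightarrow> (nat \<Rightarrow> 'e list set) \<Rightarrow> 'e list set" where
  "all_paths k Ps = (\<Union>i\<in>{1..k}. Ps i)"

definition feasible ::
  "nat \<Rightarrow> (nat \<Rightarrow> real) \<Rightarrow> (nat \<Rightarrow> 'e list set) \<Rightarrow> ('e list \<Rightarrow> real) \<Rightarrow> bool" where
  "feasible k r Ps f \<longleftrightarrow>
     (\<forall>P. f P \<ge> 0) \<and> (\<forall>P. P \<notin> all_paths k Ps \<longrightarrow> f P = 0) \<and>
     (\<forall>i\<in>{1..k}. (\<Sum>P\<in>Ps i. f P) = r i)"

definition edge_flow :: "nat \<Rightarrow> (nat \<Rightarrow> 'e list set) \<Rightarrow> ('e list \<Rightarrow> real) \<Rightarrow> 'e \<Rightarrow> real" where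
  "edge_flow k Ps f e = (\<Sum>P\<in>{P\<in>all_paths k Ps. e \<in> set P}. f P)"

definition path_cost ::
  "nat \<Rightarrow> (nat \<Rightarrow> 'e list set) \<Rightarrow> ('e \<Rightarrow> real \<Rightarrow> real) \<Rightarrow> ('e list \<Rightarrow> real) \<Rightarrow> 'e list \<Rightarrow> real" where
  "path_cost k Ps c f P = sum_list (map (\<lambda>e. c e (edge_flow k Ps f e)) P)"

definition total_cost ::
  "'e set \<Rightarrow> nat \<Rightarrow> (nat \<Rightarrow> 'e list set) \<Rightarrow> ('e \<Rightarrow> real \<Rightarrow> real) \<Rightarrow> ('e list \<Rightarrow> real) \<Rightarrow> real" where
  "total_cost E k Ps c f = (\<Sum>e\<in>E. c e (edge_flow k Ps f e) * edge_flow k Ps f e)"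

definition equilibrium ::
  "nat \<Rightarrow> (nat \<Rightarrow> real) \<Rightarrow> (nat \<Rightarrow> 'e list set) \<Rightarrow> ('e \<Rightarrow> real \<Rightarrow> real) \<Rightarrow> ('e list \<Rightarrow> real) \<Rightarrow> bool" where
  "equilibrium k r Ps c f \<longleftrightarrow> feasible k r Ps f \<and>
     (\<forall>i\<in>{1..k}. \<forall>P\<in>Ps i. \<forall>P'\<in>Ps i. f P > 0 \<longrightarrow> path_cost k Ps c f P \<le> path_cost k Ps c f P')"

definition transition ::
  "nat \<Rightarrow> (nat \<Rightarrow> real) \<Rightarrow> (nat \<Rightarrow> 'e list set) \<Rightarrow> ('e \<Rightarrow> real \<Rightarrow> real) \<Rightarrow> ('e list \<Rightarrow> real) \<Rightarrow> bool" where
  "transition k r Ps c f \<longleftrightarrow> feasible k r Ps f \<and>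
     (\<forall>i\<in>{1..k}. \<forall>P\<in>Ps i. f P > 0 \<longrightarrow> (\<exists>f'. equilibrium k r Ps c f' \<and> f' P > 0))"

definition PoTS ::
  "'e set \<Rightarrow> nat \<Rightarrow> (nat \<Rightarrow> real) \<Rightarrow> (nat \<Rightarrow> 'e list set) \<Rightarrow> ('e \<Rightarrow> real \<Rightarrow> real) \<Rightarrow> ereal" where
  "PoTS E k r Ps c =
     (INF f\<in>{f. transition k r Ps c f}. ereal (total_cost E k Ps c f)) /
     (INF f\<in>{f. feasible k r Ps f}. ereal (total_cost E k Ps c f))"

end

theory Submission imports Defs begin

lemma smo_le:
  assumes "strict_mono_on {0..} (h::real\<Rightarrow>real)" "0 \<le> a" "a \<le> b"
  shows "h a \<le> h b"
proof (cases "a = b")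
  case False
  then have "a < b" using assms by simp
  then show ?thesis using assms unfolding strict_mono_on_def by (auto intro: less_imp_le)
qed simp

lemma single_eq:
  fixes A :: "'a set" and C :: "'a \<Rightarrow> real \<Rightarrow> real"
  assumes fin: "finite A" and ne: "A \<noteq> {}" and rpos: "r > 0"
    and cont: "\<forall>a\<in>A. continuous_on {0..} (C a)"
    and mono: "\<forall>a\<in>A. strict_mono_on {0..} (C a)"
    and c0: "\<forall>a\<in>A. C a 0 = c0"
  shows "\<exists>x. (\<forall>a\<in>A. x a > 0) \<and> (\<Sum>a\<in>A. x a) = r \<and> (\<forall>a\<in>A. \<forall>b\<in>A. C a (x a) \<le> C b (x b))"
proof -
  define g where "g a = inv_into {0..r} (C a)" for a
  have contr: "continuous_on {0..r} (C a)" if "a \<in> A" for a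
    using cont that continuous_on_subset by fastforce
  have ginv: "g a (C a v) = v" if "a \<in> A" "v \<in> {0..r}" for a v
  proof -
    have "inj_on (C a) {0..r}"
      using strict_mono_on_imp_inj_on[of "{0..}" "C a"] mono that inj_on_subset by fastforce
    then show ?thesis using that by (simp add: g_def)
  qed
  have lt0r: "C a 0 < C a r" if "a \<in> A" for a
    using mono that rpos by (auto simp: strict_mono_on_def)
  have img: "C a ` {0..r} = {C a 0..C a r}" if aA: "a \<in> A" for a
  proof
    show "C a ` {0..r} \<subseteq> {C a 0..C a r}"
      using smo_le[of "C a"] mono that by auto
    show "{C a 0..C a r} \<subseteq> C a ` {0..r}"
    proof
      fix v assume "v \<in> {C a 0..C a r}"
      then obtain u where "0 \<le> u" "u \<le> r" "C a u = v"
        using IVT'[of "C a" 0 v r] contr[OF aA] rpos by auto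
      then show "v \<in> C a ` {0..r}" by auto
    qed
  qed
  have gcont: "continuous_on {C a 0..C a r} (g a)" if "a \<in> A" for a
    using continuous_on_inv[of "{0..r}" "C a" "g a"] contr[OF that] ginv[OF that] img[OF that]
    by auto
  have gin: "g a v \<in> {0..r} \<and> C a (g a v) = v" if "a \<in> A" "v \<in> {C a 0..C a r}" for a v
    using img[OF that(1)] that ginv[OF that(1)] by (metis imageE)
  define y where "y a L = g a (max (C a 0) (min (C a r) L))" for a L
  have yprop: "y a L \<in> {0..r} \<and> C a (y a L) = max (C a 0) (min (C a r) L)" if "a \<in> A" for a L
    unfolding y_def using gin[OF that] lt0r[OF that] by auto
  have ycont: "continuous_on UNIV (y a)" if "a \<in> A" for a
    unfolding y_def
  proof (rule continuous_on_compose2[OF gcont[OF that]])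
    show "continuous_on UNIV (\<lambda>L. max (C a 0) (min (C a r) L))"
      by (intro continuous_intros)
    show "(\<lambda>L. max (C a 0) (min (C a r) L)) ` UNIV \<subseteq> {C a 0..C a r}"
      using lt0r[OF that] by auto
  qed
  define S where "S L = (\<Sum>a\<in>A. y a L)" for L
  have Scont: "continuous_on UNIV S"
    unfolding S_def using ycont by (auto intro!: continuous_on_sum)
  have y0: "y a c0 = 0" if "a \<in> A" for a
    using ginv[OF that, of 0] lt0r[OF that] c0 that rpos unfolding y_def by (simp add: max_def min_def)
  have S0: "S c0 = 0" unfolding S_def using y0 by simp
  define Lm where "Lm = Max ((\<lambda>a. C a r) ` A)"
  have Lmge: "C a r \<le> Lm" if "a \<in> A" for a
    unfolding Lm_def using fin that by auto
  have yLm: "y a Lm = r" if "a \<in> A" for a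
    using ginv[OF that, of r] lt0r[OF that] Lmge[OF that] rpos unfolding y_def by (simp add: max_def min_def)
  have SLm: "S Lm \<ge> r"
  proof -
    obtain a0 where a0: "a0 \<in> A" using ne by auto
    have "S Lm = real (card A) * r" unfolding S_def using yLm by simp
    moreover have "card A \<ge> 1" using fin ne by (simp add: Suc_le_eq card_gt_0_iff)
    ultimately have "real (card A) \<ge> 1" by simp
    then have "real (card A) * r \<ge> 1 * r" using rpos by (intro mult_right_mono) auto
    then show ?thesis using \<open>S Lm = real (card A) * r\<close> by simp
  qed
  have c0Lm: "c0 \<le> Lm"
  proof -
    obtain a0 where a0: "a0 \<in> A" using ne by auto
    show ?thesis using lt0r[OF a0] Lmge[OF a0] c0 a0 by force
  qed
  obtain L where L: "c0 \<le> L" "L \<le> Lm" "S L = r"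
    using IVT'[of S c0 r Lm] S0 SLm c0Lm rpos continuous_on_subset[OF Scont] by auto
  have Lgt: "L > c0" using L S0 rpos by (cases "L = c0") auto
  define x where "x a = y a L" for a
  have xpos: "x a > 0" if "a \<in> A" for a
  proof (rule ccontr)
    assume "\<not> x a > 0"
    then have "x a = 0" using yprop[OF that, of L] unfolding x_def by auto
    then have "C a 0 = max (C a 0) (min (C a r) L)" using yprop[OF that, of L] unfolding x_def by auto
    moreover have "max (C a 0) (min (C a r) L) > C a 0" using Lgt lt0r[OF that] c0 that by simp
    ultimately show False by linarith
  qed
  have xsum: "(\<Sum>a\<in>A. x a) = r" using L unfolding S_def x_def by simp
  have xeq: "C a (x a) \<le> C b (x b)" if ab: "a \<in> A" "b \<in> A" for a b
  proof (cases "L < C b r")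
    case True
    then have "C b (x b) = L" using yprop[OF ab(2), of L] Lgt c0 ab unfolding x_def by auto
    moreover have "C a (x a) \<le> L" using yprop[OF ab(1), of L] Lgt c0 ab unfolding x_def by auto
    ultimately show ?thesis by simp
  next
    case False
    then have xb: "x b = r" using ginv[OF ab(2), of r] lt0r[OF ab(2)] rpos unfolding x_def y_def by (simp add: max_def min_def)
    have "(\<Sum>a\<in>A. x a) = x b + (\<Sum>a\<in>A-{b}. x a)" using fin ab(2) by (simp add: sum.remove)
    then have s0: "(\<Sum>a\<in>A-{b}. x a) = 0" using xb xsum by simp
    have "A - {b} = {}"
    proof (rule ccontr)
      assume "A - {b} \<noteq> {}"
      then have "(\<Sum>a\<in>A-{b}. x a) > 0" using fin xpos by (intro sum_pos) auto
      then show False using s0 by simp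
    qed
    then have "a = b" using ab by auto
    then show ?thesis by simp
  qed
  show ?thesis using xpos xsum xeq by blast
qed

theorem proposition6:
  fixes V :: "'v set" and E :: "'e set" and etail ehead :: "'e \<Rightarrow> 'v"
    and k :: nat and s t :: "nat \<Rightarrow> 'v" and r :: "nat \<Rightarrow> real"
    and Ps :: "nat \<Rightarrow> 'e list set" and c :: "'e \<Rightarrow> real \<Rightarrow> real"
  assumes game: "routing_game V E etail ehead k s t r Ps c"
    and disjoint: "\<forall>P\<in>all_paths k Ps. \<forall>P'\<in>all_paths k Ps. P \<noteq> P' \<longrightarrow> set P \<inter> set P' = {}"
    and cont: "\<forall>e\<in>E. continuous_on {0..} (c e)"
    and incr: "\<forall>e\<in>E. strict_mono_on {0..} (c e)"
    and zero_eq: "\<forall>i\<in>{1..k}. \<forall>P\<in>Ps i. \<forall>P'\<in>Ps i.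
                    (\<Sum>e\<leftarrow>P. c e 0) = (\<Sum>e\<leftarrow>P'. c e 0)"
  shows "PoTS E k r Ps c = 1"
proof -
  have finE: "finite E" and k1: "k \<ge> 1"
    and com: "\<forall>i\<in>{1..k}. s i \<in> V \<and> t i \<in> V \<and> s i \<noteq> t i \<and> r i > 0 \<and>
        finite (Ps i) \<and> Ps i \<noteq> {} \<and> (\<forall>P\<in>Ps i. is_path V E etail ehead (s i) (t i) P)"
    and Psdisj: "\<forall>i\<in>{1..k}. \<forall>j\<in>{1..k}. i \<noteq> j \<longrightarrow> Ps i \<inter> Ps j = {}"
    and cnn: "\<forall>e\<in>E. \<forall>x\<ge>0. c e x \<ge> 0"
    using game unfolding routing_game_def by auto
  have allp: "P \<in> all_paths k Ps \<longleftrightarrow> (\<exists>i\<in>{1..k}. P \<in> Ps i)" for P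
    unfolding all_paths_def by auto
  have pprops: "set P \<subseteq> E \<and> distinct P \<and> P \<noteq> []" if Pin: "P \<in> all_paths k Ps" for P
  proof -
    obtain i where i: "i \<in> {1..k}" "P \<in> Ps i" using Pin by (auto simp: allp)
    then have ip: "is_path V E etail ehead (s i) (t i) P" and st: "s i \<noteq> t i" using com by auto
    then have "distinct (map ehead P)" unfolding is_path_def by auto
    then have "distinct P" by (simp add: distinct_map)
    then show ?thesis using ip st unfolding is_path_def by auto
  qed
  define CP where "CP P x = (\<Sum>e\<in>set P. c e x)" for P x
  have sl: "(\<Sum>e\<leftarrow>P. c e x) = CP P x" if "P \<in> all_paths k Ps" for P x
    unfolding CP_def using pprops[OF that] by (simp add: sum_list_distinct_conv_sum_set)
  have ef: "edge_flow k Ps f e = f P" if Pa: "P \<in> all_paths k Ps" and eP: "e \<in> set P" for f P e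
  proof -
    have "{Q \<in> all_paths k Ps. e \<in> set Q} = {P}"
    proof (intro equalityI subsetI)
      fix Q assume "Q \<in> {Q \<in> all_paths k Ps. e \<in> set Q}"
      then have Q: "Q \<in> all_paths k Ps" "e \<in> set Q" by auto
      have "Q = P"
      proof (rule ccontr)
        assume "Q \<noteq> P"
        then have "set Q \<inter> set P = {}" using disjoint Q(1) Pa by blast
        then show False using Q(2) eP by blast
      qed
      then show "Q \<in> {P}" by simp
    next
      fix Q assume "Q \<in> {P}" then show "Q \<in> {Q \<in> all_paths k Ps. e \<in> set Q}" using Pa eP by simp
    qed
    then show ?thesis unfolding edge_flow_def by simp
  qed
  have pc: "path_cost k Ps c f P = CP P (f P)" if "P \<in> all_paths k Ps" for f P
  proof -
    have "path_cost k Ps c f P = (\<Sum>e\<leftarrow>P. c e (f P))"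
      unfolding path_cost_def by (rule arg_cong[where f=sum_list], rule map_cong) (simp_all add: ef[OF that])
    then show ?thesis using sl[OF that] by simp
  qed
  have CPcont: "continuous_on {0..} (CP P)" if "P \<in> all_paths k Ps" for P
    unfolding CP_def using pprops[OF that] cont by (intro continuous_on_sum) auto
  have CPmono: "strict_mono_on {0..} (CP P)" if "P \<in> all_paths k Ps" for P
  proof (rule strict_mono_onI)
    fix x y :: real assume "x \<in> {0..}" "y \<in> {0..}" "x < y"
    then show "CP P x < CP P y" unfolding CP_def using pprops[OF that] incr
      by (intro sum_strict_mono) (auto simp: strict_mono_on_def)
  qed
  have exX: "\<forall>i\<in>{1..k}. \<exists>X. (\<forall>P\<in>Ps i. X P > 0) \<and> (\<Sum>P\<in>Ps i. X P) = r i \<and>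
      (\<forall>P\<in>Ps i. \<forall>P'\<in>Ps i. CP P (X P) \<le> CP P' (X P'))"
  proof
    fix i assume i: "i \<in> {1..k}"
    have "Ps i \<noteq> {}" using com i by auto
    then obtain P0 where P0: "P0 \<in> Ps i" by auto
    have sub: "P \<in> all_paths k Ps" if "P \<in> Ps i" for P using i that by (auto simp: allp)
    show "\<exists>X. (\<forall>P\<in>Ps i. X P > 0) \<and> (\<Sum>P\<in>Ps i. X P) = r i \<and>
      (\<forall>P\<in>Ps i. \<forall>P'\<in>Ps i. CP P (X P) \<le> CP P' (X P'))"
    proof (rule single_eq[of "Ps i" "r i" CP "CP P0 0"])
      show "finite (Ps i)" "Ps i \<noteq> {}" "0 < r i" using com i by auto
      show "\<forall>a\<in>Ps i. continuous_on {0..} (CP a)" using CPcont sub by blast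
      show "\<forall>a\<in>Ps i. strict_mono_on {0..} (CP a)" using CPmono sub by blast
      show "\<forall>a\<in>Ps i. CP a 0 = CP P0 0"
      proof
        fix a assume a: "a \<in> Ps i"
        have "(\<Sum>e\<leftarrow>a. c e 0) = (\<Sum>e\<leftarrow>P0. c e 0)" using zero_eq i a P0 by blast
        then show "CP a 0 = CP P0 0" using sl[OF sub[OF a]] sl[OF sub[OF P0]] by simp
      qed
    qed
  qed
  from bchoice[OF exX] obtain X where X: "\<forall>i\<in>{1..k}. (\<forall>P\<in>Ps i. X i P > 0) \<and> (\<Sum>P\<in>Ps i. X i P) = r i \<and>
      (\<forall>P\<in>Ps i. \<forall>P'\<in>Ps i. CP P (X i P) \<le> CP P' (X i P'))"
    ..
  define f0 where "f0 P = (if P \<in> all_paths k Ps then X (SOME i. i \<in> {1..k} \<and> P \<in> Ps i) P else 0)" for P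
  have f0i: "f0 P = X i P" if ii: "i \<in> {1..k}" and Pi: "P \<in> Ps i" for i P
  proof -
    have "(SOME i. i \<in> {1..k} \<and> P \<in> Ps i) = i"
    proof (rule some_equality)
      show "i \<in> {1..k} \<and> P \<in> Ps i" using ii Pi by simp
    next
      fix j assume j: "j \<in> {1..k} \<and> P \<in> Ps j"
      show "j = i"
      proof (rule ccontr)
        assume "j \<noteq> i"
        then have "Ps j \<inter> Ps i = {}" using Psdisj j ii by blast
        then show False using j Pi by blast
      qed
    qed
    moreover have "P \<in> all_paths k Ps" using ii Pi by (auto simp: allp)
    ultimately show ?thesis unfolding f0_def by simp
  qed
  have f0pos: "f0 P > 0" if "P \<in> all_paths k Ps" for P
  proof -
    have "\<exists>i\<in>{1..k}. P \<in> Ps i" using allp[of P] that by simp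
    then obtain i where i: "i \<in> {1..k}" "P \<in> Ps i" by blast
    have "\<forall>P\<in>Ps i. X i P > 0" using X i(1) by blast
    then show ?thesis using f0i[OF i] i(2) by simp
  qed
  have f0feas: "feasible k r Ps f0"
    unfolding feasible_def
  proof (intro conjI allI impI ballI)
    fix P show "0 \<le> f0 P" using f0pos[of P] by (cases "P \<in> all_paths k Ps") (auto simp: f0_def)
  next
    fix P assume "P \<notin> all_paths k Ps" then show "f0 P = 0" by (simp add: f0_def)
  next
    fix i assume i: "i \<in> {1..k}"
    have "(\<Sum>P\<in>Ps i. f0 P) = (\<Sum>P\<in>Ps i. X i P)" using f0i[OF i] by simp
    then show "(\<Sum>P\<in>Ps i. f0 P) = r i" using X i by simp
  qed
  have f0eq: "equilibrium k r Ps c f0"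
    unfolding equilibrium_def
  proof (intro conjI f0feas ballI impI)
    fix i P P' assume i: "i \<in> {1..k}" and P: "P \<in> Ps i" and P': "P' \<in> Ps i"
    have a: "P \<in> all_paths k Ps" "P' \<in> all_paths k Ps" using i P P' by (auto simp: allp)
    show "path_cost k Ps c f0 P \<le> path_cost k Ps c f0 P'"
      unfolding pc[OF a(1)] pc[OF a(2)] f0i[OF i P] f0i[OF i P'] using X i P P' by blast
  qed
  have sets: "{f. transition k r Ps c f} = {f. feasible k r Ps f}"
  proof -
    have "\<forall>i\<in>{1..k}. \<forall>P\<in>Ps i. f P > 0 \<longrightarrow> (\<exists>f'. equilibrium k r Ps c f' \<and> f' P > 0)" for f :: "'e list \<Rightarrow> real"
    proof (intro ballI impI)
      fix i P assume "i \<in> {1..k}" "P \<in> Ps i"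
      then have "f0 P > 0" by (intro f0pos) (auto simp: allp)
      then show "\<exists>f'. equilibrium k r Ps c f' \<and> 0 < f' P" using f0eq by blast
    qed
    then have "transition k r Ps c f \<longleftrightarrow> feasible k r Ps f" for f
      unfolding transition_def by blast
    then show ?thesis by simp
  qed
  define I where "I = (INF f\<in>{f. feasible k r Ps f}. ereal (total_cost E k Ps c f))"
  have PoTS_I: "PoTS E k r Ps c = I / I" unfolding PoTS_def I_def sets ..
  have one: "1 \<in> {1..k}" using k1 by auto
  define n where "n = card (Ps 1)"
  have npos: "n > 0" unfolding n_def using com one by (auto simp: card_gt_0_iff)
  define q where "q = r 1 / n"
  have qpos: "q > 0" unfolding q_def using com one npos by auto
  define U where "U = (\<Union>P\<in>Ps 1. set P)"
  have U: "finite U" "U \<noteq> {}" "U \<subseteq> E"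
  proof -
    show "finite U" unfolding U_def using com one by auto
    have "Ps 1 \<noteq> {}" using com one by auto
    then obtain P where P: "P \<in> Ps 1" by auto
    then have "P \<in> all_paths k Ps" using one by (auto simp: allp)
    then show "U \<noteq> {}" using pprops P unfolding U_def by fastforce
    show "U \<subseteq> E"
    proof
      fix e assume "e \<in> U"
      then obtain P where P: "P \<in> Ps 1" "e \<in> set P" unfolding U_def by blast
      then have "P \<in> all_paths k Ps" using one by (auto simp: allp)
      then show "e \<in> E" using pprops P(2) by blast
    qed
  qed
  define \<delta> where "\<delta> = Min ((\<lambda>e. c e q * q) ` U)"
  have cq: "c e q > 0" if "e \<in> E" for e
  proof -
    have "c e 0 < c e q" using incr that qpos by (auto simp: strict_mono_on_def)
    then show ?thesis using cnn that by force
  qed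
  have dpos: "\<delta> > 0" unfolding \<delta>_def using U cq qpos by auto
  have lb: "total_cost E k Ps c f \<ge> \<delta>" if fe: "feasible k r Ps f" for f
  proof -
    have fnn: "\<forall>P. f P \<ge> 0" and fs: "(\<Sum>P\<in>Ps 1. f P) = r 1" using fe one unfolding feasible_def by auto
    obtain P where P: "P \<in> Ps 1" "f P \<ge> q"
    proof (rule ccontr)
      assume "\<not> thesis"
      then have "\<forall>P\<in>Ps 1. f P < q" using that by force
      then have "(\<Sum>P\<in>Ps 1. f P) < (\<Sum>P\<in>Ps 1. q)" using com one by (intro sum_strict_mono) auto
      also have "\<dots> = r 1" unfolding q_def n_def using npos n_def by simp
      finally show False using fs by simp
    qed
    have Pa: "P \<in> all_paths k Ps" using P one by (auto simp: allp)
    obtain e where e: "e \<in> set P" using pprops[OF Pa] by (cases P) auto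
    have eU: "e \<in> U" using e P unfolding U_def by auto
    have eE: "e \<in> E" using eU U by auto
    have efnn: "edge_flow k Ps f e' \<ge> 0" for e' unfolding edge_flow_def using fnn by (simp add: sum_nonneg)
    have "\<delta> \<le> c e q * q" unfolding \<delta>_def using U eU by (intro Min_le) auto
    also have "\<dots> \<le> c e (f P) * f P"
    proof (rule mult_mono)
      show "c e q \<le> c e (f P)" using smo_le[of "c e" q "f P"] incr eE qpos P by auto
    qed (use P cq[OF eE] qpos cnn eE in auto)
    also have "\<dots> = c e (edge_flow k Ps f e) * edge_flow k Ps f e" using ef[OF Pa e] by simp
    also have "\<dots> \<le> total_cost E k Ps c f" unfolding total_cost_def
      by (rule member_le_sum) (use eE finE cnn efnn in auto)
    finally show ?thesis .
  qed
  have Ige: "ereal \<delta> \<le> I" unfolding I_def using lb by (auto intro!: INF_greatest)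
  have Ile: "I \<le> ereal (total_cost E k Ps c f0)" unfolding I_def using f0feas by (auto intro!: INF_lower)
  have "\<bar>I\<bar> \<noteq> \<infinity>" "I \<noteq> 0" using Ige Ile dpos by auto
  then show ?thesis unfolding PoTS_I by simp
qed

end
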